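(* Let $A=(A_n(x))_{n\ge0}$ be an Appell sequence with exponential generating function $\sum_{k\ge0}A_k(x)t^k/k!=e^{xt}f_A(t)$, and write $\log f_A(t)=\sum_{k\ge1}c_k t^k/k!$. Let $\varphi_A:\Lambda\to\mathbb{R}[x]$ be the ring homomorphism with $\varphi_A(h_m)=A_m/m!$ for $m\ge1$. Then $\varphi_A(p_1)=x+c_1$ and $\varphi_A(p_n)=c_n/(n-1)!$ for all $n\ge2$.
   Context: An Appell sequence is a sequence of real polynomials $(A_n)_{n\ge0}$ with $A_0=1$ and $A_n'=nA_{n-1}$ for $n\ge1$; then $f_A(t)=\sum_k A_k(0)t^k/k!$ is a formal power series with $f_A(0)=1$. $\Lambda$ is the ring of symmetric functions, freely generated by the complete homogeneous symmetric functions $h_m$; $p_n=\sum_i x_i^n$ is the $n$-th power sum symmetric function. *)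

theory Defs
  imports "HOL-Library.Poly_Mapping" "HOL-Computational_Algebra.Computational_Algebra"
begin

definition appell :: "(nat \<Rightarrow> real poly) \<Rightarrow> bool" where
  "appell A \<longleftrightarrow> A 0 = 1 \<and> (\<forall>n\<ge>1. pderiv (A n) = smult (real n) (A (n - 1)))"

definition appell_f :: "(nat \<Rightarrow> real poly) \<Rightarrow> real fps" where
  "appell_f A = Abs_fps (\<lambda>k. poly (A k) 0 / fact k)"

text \<open>Formal logarithm of a power series F with F(0) = 1: log F = log(1 + (F - 1)).\<close>
definition fps_log1 :: "real fps \<Rightarrow> real fps" where
  "fps_log1 F = fps_ln 1 oo (F - 1)"

definition appell_c :: "(nat \<Rightarrow> real poly) \<Rightarrow> nat \<Rightarrow> real" where
  "appell_c A k = fact k * (fps_log1 (appell_f A) $ k)"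

text \<open>Formal power series with integer coefficients in countably many variables x_0, x_1, ...;
  a monomial is a finitely supported exponent vector.\<close>
type_synonym sfun = "(nat \<Rightarrow>\<^sub>0 nat) \<Rightarrow> int"

definition mdeg :: "(nat \<Rightarrow>\<^sub>0 nat) \<Rightarrow> nat" where
  "mdeg \<alpha> = (\<Sum>i\<in>Poly_Mapping.keys \<alpha>. Poly_Mapping.lookup \<alpha> i)"

definition sf_one :: sfun where
  "sf_one \<alpha> = (if \<alpha> = 0 then 1 else 0)"

definition sf_add :: "sfun \<Rightarrow> sfun \<Rightarrow> sfun" where
  "sf_add f g \<alpha> = f \<alpha> + g \<alpha>"

definition sf_mult :: "sfun \<Rightarrow> sfun \<Rightarrow> sfun" where
  "sf_mult f g \<alpha> = (\<Sum>(\<beta>, \<gamma>) \<in> {(\<beta>, \<gamma>). \<beta> + \<gamma> = \<alpha>}. f \<beta> * g \<gamma>)"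

definition sf_symmetric :: "sfun \<Rightarrow> bool" where
  "sf_symmetric f \<longleftrightarrow> (\<forall>\<sigma>::nat \<Rightarrow> nat. bij \<sigma> \<longrightarrow>
     (\<forall>\<alpha> \<beta>. (\<forall>i. Poly_Mapping.lookup \<beta> i = Poly_Mapping.lookup \<alpha> (\<sigma> i)) \<longrightarrow> f \<beta> = f \<alpha>))"

definition sf_bounded_degree :: "sfun \<Rightarrow> bool" where
  "sf_bounded_degree f \<longleftrightarrow> (\<exists>d. \<forall>\<alpha>. f \<alpha> \<noteq> 0 \<longrightarrow> mdeg \<alpha> \<le> d)"

definition Lambda :: "sfun set" where
  "Lambda = {f. sf_symmetric f \<and> sf_bounded_degree f}"

definition sf_h :: "nat \<Rightarrow> sfun" where
  "sf_h m \<alpha> = (if mdeg \<alpha> = m then 1 else 0)"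

definition sf_p :: "nat \<Rightarrow> sfun" where
  "sf_p n \<alpha> = (if \<exists>i. \<alpha> = Poly_Mapping.single i n then 1 else 0)"

definition ring_hom_Lambda :: "(sfun \<Rightarrow> 'b::ring_1) \<Rightarrow> bool" where
  "ring_hom_Lambda \<phi> \<longleftrightarrow> \<phi> sf_one = 1 \<and>
     (\<forall>f\<in>Lambda. \<forall>g\<in>Lambda. \<phi> (sf_add f g) = \<phi> f + \<phi> g \<and> \<phi> (sf_mult f g) = \<phi> f * \<phi> g)"

end

theory Submission imports Defs begin
lemma log_deriv:
  fixes f :: "real fps"
  assumes f0: "f $ 0 = 1"
  shows "fps_deriv f = f * fps_deriv (fps_log1 f)"
proof -
  let ?G = "f - 1"
  have G0: "?G $ 0 = 0" using f0 by simp
  define D where "D = inverse (1 + fps_X :: real fps)"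
  have DD: "fps_deriv (fps_ln (1::real)) = D" unfolding D_def fps_ln_deriv by simp
  have "(1 + fps_X) * D = 1" unfolding D_def by (rule inverse_mult_eq_1') simp
  hence "((1 + fps_X) * D) oo ?G = 1" by simp
  hence "((1 + fps_X) oo ?G) * (D oo ?G) = 1" by (simp add: fps_compose_mult_distrib[OF G0])
  moreover have "(1 + fps_X) oo ?G = f" by (subst fps_compose_add_distrib) (simp only: fps_X_fps_compose_startby0[OF G0] fps_compose_1, simp)
  ultimately have fD: "f * (D oo ?G) = 1" by simp
  have "fps_deriv (fps_log1 f) = (D oo ?G) * fps_deriv f"
    unfolding fps_log1_def by (simp add: fps_compose_deriv[OF G0] DD)
  hence "f * fps_deriv (fps_log1 f) = (f * (D oo ?G)) * fps_deriv f" by (simp add: algebra_simps)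
  thus ?thesis using fD by simp
qed


lemma pderiv_sum: "pderiv (sum f S) = (\<Sum>i\<in>S. pderiv (f i))"
  by (induction S rule: infinite_finite_induct) (auto simp: pderiv_add)

lemma const_poly_add: "[:a + b:] = [:a:] + [:b:]" by simp

lemma const_poly_sum: "[:sum f S:] = (\<Sum>i\<in>S. [:f i:])"
  by (induction S rule: infinite_finite_induct) (simp_all add: const_poly_add del: add_pCons pCons_0_0)

definition lift :: "real fps \<Rightarrow> real poly fps" where
  "lift f = Abs_fps (\<lambda>k. [:f $ k:])"

lemma lift_nth[simp]: "lift f $ k = [:f $ k:]" by (simp add: lift_def)

lemma lift_mult: "lift (f * g) = lift f * lift g"
  by (rule fps_ext) (simp add: fps_mult_nth const_poly_sum mult.commute)

lemma lift_add: "lift (f + g) = lift f + lift g"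
  by (rule fps_ext) simp

lemma lift_deriv: "fps_deriv (lift f) = lift (fps_deriv f)"
  by (rule fps_ext) (simp add: of_nat_poly)

definition Eexp :: "real poly fps" where
  "Eexp = Abs_fps (\<lambda>m. monom (1 / fact m) m)"

lemma Eexp_deriv: "fps_deriv Eexp = fps_const [:0,1:] * Eexp"
proof (rule fps_ext)
  fix n
  have "fps_deriv Eexp $ n = of_nat (n+1) * monom (1 / fact (n+1)) (n+1)" by (simp add: Eexp_def)
  also have "\<dots> = monom (1 / fact n) (n+1)"
    by (simp add: of_nat_poly monom_0[symmetric] mult_monom del: of_nat_Suc fact_Suc) (simp add: field_simps, smt (verit) fact_gt_zero of_nat_0_le_iff mult_nonneg_nonneg)
  also have "\<dots> = [:0,1:] * monom (1 / fact n) n"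
    by (simp add: monom_Suc)
  finally show "fps_deriv Eexp $ n = (fps_const [:0,1:] * Eexp) $ n" by (simp add: Eexp_def)
qed

lemma appell_explicit:
  assumes ap: "appell A"
  shows "Abs_fps (\<lambda>m. smult (1 / fact m) (A m)) = Eexp * lift (appell_f A)"
proof -
  define a where "a k = poly (A k) 0 / fact k" for k
  define B where "B n = (Eexp * lift (appell_f A)) $ n" for n
  have Bn: "B n = (\<Sum>i\<le>n. monom (1 / fact i * a (n - i)) i)" for n
    unfolding B_def fps_mult_nth
    by (rule sum.cong) (auto simp: Eexp_def appell_f_def a_def monom_0[symmetric] mult_monom atLeast0AtMost)
  have A0: "A 0 = 1" using ap by (simp add: appell_def)
  have Ad: "pderiv (A (Suc n)) = smult (real (Suc n)) (A n)" for n
    using ap unfolding appell_def by (metis diff_Suc_1 le_add1 plus_1_eq_Suc)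
  have dB: "pderiv (B (Suc n)) = B n" for n
  proof -
    have "B (Suc n) = monom (a (Suc n)) 0 + (\<Sum>i\<le>n. monom (1 / fact (Suc i) * a (n - i)) (Suc i))"
      unfolding Bn by (subst sum.atMost_Suc_shift) simp
    hence "pderiv (B (Suc n)) = (\<Sum>i\<le>n. monom (of_nat (Suc i) * (1 / fact (Suc i) * a (n - i))) i)"
      by (simp add: pderiv_sum pderiv_monom pderiv_add del: of_nat_Suc fact_Suc)
    also have "\<dots> = B n" unfolding Bn
      by (rule sum.cong) (simp_all add: field_simps del: of_nat_Suc)
    finally show ?thesis .
  qed
  have pB: "poly (B n) 0 = a n" for n
    unfolding Bn by (simp add: poly_sum poly_monom power_0_left if_distrib sum.If_cases)
  have main: "smult (fact n) (B n) = A n" for n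
  proof (induction n)
    case 0
    show ?case using pB[of 0] unfolding Bn by (simp add: a_def A0)
  next
    case (Suc n)
    let ?D = "smult (fact (Suc n)) (B (Suc n)) - A (Suc n)"
    have "pderiv ?D = smult (fact (Suc n)) (B n) - smult (real (Suc n)) (A n)"
      by (simp add: pderiv_diff pderiv_smult dB Ad)
    also have "\<dots> = 0" using Suc.IH[symmetric]
      by (simp del: of_nat_Suc fact_Suc) (simp add: algebra_simps)
    finally have "degree ?D = 0" by (simp add: pderiv_eq_0_iff)
    then obtain c where c: "?D = [:c:]" by (meson degree_eq_zeroE)
    have "poly ?D 0 = 0" using pB[of "Suc n"] by (simp add: a_def)
    with c have "?D = 0" by simp
    thus ?case by simp
  qed
  show ?thesis
  proof (rule fps_ext)
    fix n
    have "smult (1 / fact n) (A n) = B n" using main[of n, symmetric] by simp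
    thus "Abs_fps (\<lambda>m. smult (1 / fact m) (A m)) $ n = (Eexp * lift (appell_f A)) $ n"
      by (simp add: B_def)
  qed
qed


abbreviation lk :: "(nat \<Rightarrow>\<^sub>0 nat) \<Rightarrow> nat \<Rightarrow> nat" where "lk \<equiv> Poly_Mapping.lookup"
abbreviation ks :: "(nat \<Rightarrow>\<^sub>0 nat) \<Rightarrow> nat set" where "ks \<equiv> Poly_Mapping.keys"

lemma mdeg_superset:
  assumes "finite K" "ks a \<subseteq> K"
  shows "mdeg a = (\<Sum>i\<in>K. lk a i)"
  unfolding mdeg_def
  by (rule sum.mono_neutral_left) (use assms in \<open>auto simp: in_keys_iff\<close>)

lemma mdeg_add: "mdeg (a + b) = mdeg a + mdeg b"
proof -
  let ?K = "ks a \<union> ks b"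
  have "ks (a + b) \<subseteq> ?K" by (rule Poly_Mapping.keys_add)
  hence "mdeg (a + b) = (\<Sum>i\<in>?K. lk (a + b) i)" by (intro mdeg_superset) auto
  also have "\<dots> = (\<Sum>i\<in>?K. lk a i) + (\<Sum>i\<in>?K. lk b i)" by (simp add: lookup_add sum.distrib)
  also have "\<dots> = mdeg a + mdeg b" by (subst (1 2) mdeg_superset[of ?K]) auto
  finally show ?thesis .
qed

lemma mdeg_single: "mdeg (Poly_Mapping.single i k) = k"
  unfolding mdeg_def by (cases "k = 0") auto

lemma mdeg_eq_0: "mdeg a = 0 \<longleftrightarrow> a = 0"
proof
  assume "mdeg a = 0"
  hence "\<forall>i\<in>ks a. lk a i = 0" unfolding mdeg_def by simp
  hence "lk a i = 0" for i by (metis in_keys_iff)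
  thus "a = 0" by (intro poly_mapping_eqI) simp
qed (simp add: mdeg_def)

lemma lookup_le_mdeg: "lk a i \<le> mdeg a"
proof (cases "i \<in> ks a")
  case True
  then show ?thesis unfolding mdeg_def by (intro member_le_sum) auto
qed (simp add: in_keys_iff)

lemma finite_decomp: "finite {(b, c). b + c = (a :: nat \<Rightarrow>\<^sub>0 nat)}"
proof -
  let ?B = "{b. \<exists>c. b + c = a}"
  let ?F = "{f. \<forall>x. (x \<in> ks a \<longrightarrow> f x \<in> {0..mdeg a}) \<and> (x \<notin> ks a \<longrightarrow> f x = 0)}"
  have "lk ` ?B \<subseteq> ?F"
  proof (rule subsetI)
    fix f assume "f \<in> lk ` ?B"
    then obtain b c where bc: "b + c = a" "f = lk b" by auto
    have le: "lk b x \<le> lk a x" for x using bc by (metis le_add1 lookup_add)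
    show "f \<in> ?F"
      using le lookup_le_mdeg[of a] bc(2) by (auto simp: in_keys_iff) (metis le_trans, metis le_zero_eq)
  qed
  moreover have "finite ?F" by (rule finite_set_of_finite_funs) auto
  ultimately have "finite (lk ` ?B)" by (rule finite_subset)
  hence fB: "finite ?B" by (rule finite_imageD) (rule inj_onI, rule poly_mapping_eqI, simp)
  have "{(b, c). b + c = a} \<subseteq> (\<lambda>b. (b, a - b)) ` ?B" by (auto simp: image_iff)
  thus ?thesis using fB by (meson finite_imageI finite_subset)
qed

lemma single_inj: "k \<noteq> 0 \<Longrightarrow> Poly_Mapping.single i k = Poly_Mapping.single j k \<longleftrightarrow> i = j"
  by (metis lookup_single_eq lookup_single_not_eq)

lemma mult_p_h:
  assumes k: "k \<ge> 1"
  shows "sf_mult (sf_p k) (sf_h r) a = (if mdeg a = k + r then int (card {i. k \<le> lk a i}) else 0)"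
proof -
  let ?D = "{(b, c). b + c = a}"
  let ?S = "{bc \<in> ?D. \<exists>i. fst bc = Poly_Mapping.single i k}"
  let ?g = "\<lambda>bc. (if mdeg (snd bc) = r then 1 else 0) :: int"
  have fD: "finite ?D" by (rule finite_decomp)
  have "sf_mult (sf_p k) (sf_h r) a = (\<Sum>bc\<in>?D. sf_p k (fst bc) * sf_h r (snd bc))"
    unfolding sf_mult_def by (rule sum.cong) auto
  also have "\<dots> = (\<Sum>bc\<in>?D. if (\<exists>i. fst bc = Poly_Mapping.single i k) then ?g bc else 0)"
    by (rule sum.cong) (auto simp: sf_p_def sf_h_def)
  also have "\<dots> = (\<Sum>bc\<in>?S. ?g bc)"
    by (rule sum.inter_filter[symmetric, OF fD])
  also have "\<dots> = (\<Sum>bc\<in>?S. if mdeg a = k + r then 1 else 0)"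
  proof (rule sum.cong)
    fix bc assume "bc \<in> ?S"
    then obtain i c where "bc = (Poly_Mapping.single i k, c)" "Poly_Mapping.single i k + c = a" by auto
    moreover then have "mdeg a = k + mdeg c" by (metis mdeg_add mdeg_single)
    ultimately show "?g bc = (if mdeg a = k + r then 1 else 0)" by auto
  qed simp
  also have "\<dots> = (if mdeg a = k + r then int (card ?S) else 0)" by simp
  also have "card ?S = card {i. k \<le> lk a i}"
  proof -
    have "bij_betw (\<lambda>i. (Poly_Mapping.single i k, a - Poly_Mapping.single i k)) {i. k \<le> lk a i} ?S"
    proof (rule bij_betwI')
      fix x y show "((Poly_Mapping.single x k, a - Poly_Mapping.single x k) = (Poly_Mapping.single y k, a - Poly_Mapping.single y k)) = (x = y)"
        using k single_inj[of k x y] by auto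
    next
      fix x assume x: "x \<in> {i. k \<le> lk a i}"
      have "Poly_Mapping.single x k + (a - Poly_Mapping.single x k) = a"
        by (rule poly_mapping_eqI) (use x in \<open>auto simp: lookup_add lookup_minus lookup_single when_def\<close>)
      thus "(Poly_Mapping.single x k, a - Poly_Mapping.single x k) \<in> ?S" by auto
    next
      fix bc assume "bc \<in> ?S"
      then obtain i c where bc: "bc = (Poly_Mapping.single i k, c)" "Poly_Mapping.single i k + c = a" by auto
      hence "lk a i = k + lk c i" by (metis lookup_add lookup_single_eq)
      moreover have "c = a - Poly_Mapping.single i k" using bc(2) by (metis add_diff_cancel_left')
      ultimately show "\<exists>x\<in>{i. k \<le> lk a i}. bc = (Poly_Mapping.single x k, a - Poly_Mapping.single x k)"
        using bc(1) by (intro bexI[of _ i]) auto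
    qed
    thus ?thesis by (simp add: bij_betw_same_card)
  qed
  finally show ?thesis .
qed


lemma perm_keys:
  assumes "bij \<sigma>" "\<forall>i. lk b i = lk a (\<sigma> i)"
  shows "\<sigma> ` ks b = ks a"
proof -
  have "ks b = {i. lk a (\<sigma> i) \<noteq> 0}" using assms(2) by (auto simp: in_keys_iff)
  hence "\<sigma> ` ks b = \<sigma> ` {i. lk a (\<sigma> i) \<noteq> 0}" by simp
  also have "\<dots> = {j. lk a j \<noteq> 0}" using assms(1)
    by (auto simp: image_iff) (metis bij_inv_eq_iff)
  finally show ?thesis by (auto simp: in_keys_iff)
qed

lemma perm_mdeg:
  assumes "bij \<sigma>" "\<forall>i. lk b i = lk a (\<sigma> i)"
  shows "mdeg b = mdeg a"
proof -
  have inj: "inj_on \<sigma> (ks b)" using assms(1) bij_is_inj inj_on_subset by blast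
  have "mdeg a = (\<Sum>j\<in>\<sigma> ` ks b. lk a j)" unfolding mdeg_def perm_keys[OF assms] ..
  also have "\<dots> = (\<Sum>i\<in>ks b. lk a (\<sigma> i))" by (simp add: sum.reindex[OF inj])
  finally show ?thesis using assms(2) by (simp add: mdeg_def)
qed

lemma perm_card:
  assumes "bij \<sigma>" "\<forall>i. lk b i = lk a (\<sigma> i)"
  shows "card {i. k \<le> lk b i} = card {i. k \<le> lk a i}"
proof -
  have "\<sigma> ` {i. k \<le> lk b i} = {i. k \<le> lk a i}" using assms
    by (auto simp: image_iff) (metis bij_inv_eq_iff)
  moreover have "inj_on \<sigma> {i. k \<le> lk b i}" using assms(1) bij_is_inj inj_on_subset by blast
  ultimately show ?thesis by (metis card_image)
qed

lemma h_Lambda: "sf_h m \<in> Lambda"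
  unfolding Lambda_def sf_symmetric_def sf_bounded_degree_def
  by (auto simp: sf_h_def dest: perm_mdeg)

lemma p_Lambda: "sf_p n \<in> Lambda"
proof -
  have sym: "(\<exists>i. b = Poly_Mapping.single i n) \<longleftrightarrow> (\<exists>i. a = Poly_Mapping.single i n)"
    if s: "bij \<sigma>" and ba: "\<forall>i. lk b i = lk a (\<sigma> i)" for \<sigma> :: "nat \<Rightarrow> nat" and a b
  proof
    assume "\<exists>i. b = Poly_Mapping.single i n"
    then obtain i where i: "b = Poly_Mapping.single i n" by blast
    have "a = Poly_Mapping.single (\<sigma> i) n"
    proof (rule poly_mapping_eqI)
      fix j
      have "lk a j = lk b (inv \<sigma> j)" using ba s by (simp add: bij_inv_eq_iff) (metis bij_inv_eq_iff)
      thus "lk a j = lk (Poly_Mapping.single (\<sigma> i) n) j"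
        using s i by (auto simp: lookup_single when_def) (metis bij_inv_eq_iff)+
    qed
    thus "\<exists>i. a = Poly_Mapping.single i n" by blast
  next
    assume "\<exists>i. a = Poly_Mapping.single i n"
    then obtain i where i: "a = Poly_Mapping.single i n" by blast
    have "b = Poly_Mapping.single (inv \<sigma> i) n"
    proof (rule poly_mapping_eqI)
      fix j
      show "lk b j = lk (Poly_Mapping.single (inv \<sigma> i) n) j"
        using s i ba by (auto simp: lookup_single when_def) (metis bij_inv_eq_iff)+
    qed
    thus "\<exists>i. b = Poly_Mapping.single i n" by blast
  qed
  show ?thesis
    unfolding Lambda_def sf_symmetric_def sf_bounded_degree_def
    by (auto simp: sf_p_def mdeg_single dest: sym)
qed

lemma ph_Lambda:
  assumes "k \<ge> 1"
  shows "sf_mult (sf_p k) (sf_h r) \<in> Lambda"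
  unfolding Lambda_def sf_symmetric_def sf_bounded_degree_def mult_p_h[OF assms, abs_def]
  by (auto dest: perm_mdeg perm_card[where k = k])

lemma add_Lambda:
  assumes "f \<in> Lambda" "g \<in> Lambda" shows "sf_add f g \<in> Lambda"
proof -
  from assms obtain d e where d: "\<forall>a. f a \<noteq> 0 \<longrightarrow> mdeg a \<le> d" and e: "\<forall>a. g a \<noteq> 0 \<longrightarrow> mdeg a \<le> e"
    unfolding Lambda_def sf_bounded_degree_def by blast
  have "sf_bounded_degree (sf_add f g)" unfolding sf_bounded_degree_def sf_add_def
  proof (intro exI[of _ "max d e"] allI impI)
    fix a assume "f a + g a \<noteq> 0"
    hence "f a \<noteq> 0 \<or> g a \<noteq> 0" by auto
    thus "mdeg a \<le> max d e" using d e by (auto simp: le_max_iff_disj)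
  qed
  moreover have "sf_symmetric (sf_add f g)"
    using assms unfolding Lambda_def sf_symmetric_def sf_add_def by (simp only: mem_Collect_eq) metis
  ultimately show ?thesis by (simp add: Lambda_def)
qed

lemma h0: "sf_h 0 = sf_one"
  by (auto simp: sf_h_def sf_one_def mdeg_eq_0 fun_eq_iff)

primrec ssum :: "(nat \<Rightarrow> sfun) \<Rightarrow> nat \<Rightarrow> sfun" where
  "ssum F 0 = F 0"
| "ssum F (Suc m) = sf_add (ssum F m) (F (Suc m))"

lemma ssum_apply: "ssum F m a = (\<Sum>j\<le>m. F j a)"
  by (induction m) (simp_all add: sf_add_def)

lemma ssum_hom:
  assumes "ring_hom_Lambda \<phi>" "\<And>j. j \<le> m \<Longrightarrow> F j \<in> Lambda"
  shows "ssum F m \<in> Lambda \<and> \<phi> (ssum F m) = (\<Sum>j\<le>m. \<phi> (F j))"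
  using assms(2)
proof (induction m)
  case (Suc m)
  then have IH: "ssum F m \<in> Lambda" "\<phi> (ssum F m) = (\<Sum>j\<le>m. \<phi> (F j))" by auto
  have F: "F (Suc m) \<in> Lambda" using Suc.prems by simp
  show ?case using assms(1) IH F by (simp add: add_Lambda ring_hom_Lambda_def)
qed simp

lemma newton_nat:
  "(\<Sum>j\<le>m. card {i. Suc j \<le> lk a i}) = mdeg a" if "mdeg a = Suc m"
proof -
  have c: "card {i. Suc j \<le> lk a i} = (\<Sum>i\<in>ks a. if Suc j \<le> lk a i then 1 else 0)" for j
  proof -
    have "{i. Suc j \<le> lk a i} = {i\<in>ks a. Suc j \<le> lk a i}" by (auto simp: in_keys_iff)
    thus ?thesis by (simp add: sum.inter_filter[symmetric])
  qed
  have "(\<Sum>j\<le>m. card {i. Suc j \<le> lk a i}) = (\<Sum>i\<in>ks a. \<Sum>j\<le>m. if Suc j \<le> lk a i then 1 else 0)"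
    unfolding c by (rule sum.swap)
  also have "\<dots> = (\<Sum>i\<in>ks a. lk a i)"
  proof (rule sum.cong)
    fix i
    have le: "lk a i \<le> Suc m" using lookup_le_mdeg[of a i] that by simp
    have "(\<Sum>j\<le>m. if Suc j \<le> lk a i then 1 else 0) = card {j\<in>{..m}. Suc j \<le> lk a i}"
      by (simp add: sum.inter_filter[symmetric])
    also have "{j\<in>{..m}. Suc j \<le> lk a i} = {..<lk a i}" using le by auto
    finally show "(\<Sum>j\<le>m. if Suc j \<le> lk a i then 1 else 0) = lk a i" by simp
  qed simp
  finally show ?thesis by (simp add: mdeg_def)
qed

lemma newton:
  "ssum (\<lambda>_. sf_h (Suc m)) m = ssum (\<lambda>j. sf_mult (sf_p (Suc j)) (sf_h (m - j))) m"
proof (rule ext)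
  fix a
  show "ssum (\<lambda>_. sf_h (Suc m)) m a = ssum (\<lambda>j. sf_mult (sf_p (Suc j)) (sf_h (m - j))) m a"
    unfolding ssum_apply
  proof (cases "mdeg a = Suc m")
    case True
    have "(\<Sum>j\<le>m. sf_mult (sf_p (Suc j)) (sf_h (m - j)) a) = (\<Sum>j\<le>m. int (card {i. Suc j \<le> lk a i}))"
      by (rule sum.cong) (auto simp: mult_p_h True)
    also have "\<dots> = int (Suc m)" using newton_nat[OF True] True by (metis of_nat_sum)
    finally show "(\<Sum>j\<le>m. sf_h (Suc m) a) = (\<Sum>j\<le>m. sf_mult (sf_p (Suc j)) (sf_h (m - j)) a)"
      by (simp add: sf_h_def True)
  next
    case False
    show "(\<Sum>j\<le>m. sf_h (Suc m) a) = (\<Sum>j\<le>m. sf_mult (sf_p (Suc j)) (sf_h (m - j)) a)"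
      using False by (simp add: sf_h_def mult_p_h)
  qed
qed

theorem proposition4p3:
  fixes A :: "nat \<Rightarrow> real poly" and \<phi> :: "sfun \<Rightarrow> real poly"
  assumes "appell A"
    and "ring_hom_Lambda \<phi>"
    and "\<And>m. m \<ge> 1 \<Longrightarrow> \<phi> (sf_h m) = smult (1 / fact m) (A m)"
  shows "\<phi> (sf_p 1) = [:appell_c A 1, 1:] \<and>
         (\<forall>n\<ge>2. \<phi> (sf_p n) = [:appell_c A n / fact (n - 1):])"
proof -
  let ?f = "appell_f A"
  let ?L = "fps_log1 ?f"
  define HA where "HA = Abs_fps (\<lambda>m. smult (1 / fact m) (A m))"
  define Q where "Q = fps_const [:0,1:] + lift (fps_deriv ?L)"
  define P where "P = Abs_fps (\<lambda>j. \<phi> (sf_p (Suc j)))"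
  have A0: "A 0 = 1" using assms(1) by (simp add: appell_def)
  have f0: "?f $ 0 = 1" by (simp add: appell_f_def A0)
  have HAe: "HA = Eexp * lift ?f" unfolding HA_def by (rule appell_explicit[OF assms(1)])
  have dQ: "fps_deriv HA = Q * HA"
  proof -
    have "fps_deriv (lift ?f) = lift ?f * lift (fps_deriv ?L)"
      by (simp add: lift_deriv log_deriv[OF f0] lift_mult)
    thus ?thesis unfolding HAe Q_def by (simp add: Eexp_deriv algebra_simps)
  qed
  have phih: "\<phi> (sf_h m) = HA $ m" for m
    using assms(2,3) by (cases m) (auto simp: HA_def h0 A0 ring_hom_Lambda_def)
  have mulhom: "\<forall>f\<in>Lambda. \<forall>g\<in>Lambda. \<phi> (sf_mult f g) = \<phi> f * \<phi> g"
    using assms(2) by (simp add: ring_hom_Lambda_def)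
  have dP: "fps_deriv HA = P * HA"
  proof (rule fps_ext)
    fix m
    have "\<phi> (ssum (\<lambda>_. sf_h (Suc m)) m) = \<phi> (ssum (\<lambda>j. sf_mult (sf_p (Suc j)) (sf_h (m - j))) m)"
      by (simp only: newton)
    moreover have "\<phi> (ssum (\<lambda>_. sf_h (Suc m)) m) = (\<Sum>j\<le>m. \<phi> (sf_h (Suc m)))"
      using ssum_hom[OF assms(2), of m "\<lambda>_. sf_h (Suc m)"] h_Lambda by simp
    moreover have "\<phi> (ssum (\<lambda>j. sf_mult (sf_p (Suc j)) (sf_h (m - j))) m)
        = (\<Sum>j\<le>m. \<phi> (sf_mult (sf_p (Suc j)) (sf_h (m - j))))"
      using ssum_hom[OF assms(2), of m "\<lambda>j. sf_mult (sf_p (Suc j)) (sf_h (m - j))"] ph_Lambda by simp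
    moreover have "\<phi> (sf_mult (sf_p (Suc j)) (sf_h (m - j))) = \<phi> (sf_p (Suc j)) * \<phi> (sf_h (m - j))" for j
      using mulhom p_Lambda[of "Suc j"] h_Lambda[of "m - j"] by blast
    ultimately have "of_nat (Suc m) * HA $ Suc m = (\<Sum>j\<le>m. P $ j * HA $ (m - j))"
      by (simp add: phih P_def del: of_nat_Suc)
    thus "fps_deriv HA $ m = (P * HA) $ m" by (simp add: fps_mult_nth atLeast0AtMost)
  qed
  have "HA $ 0 = 1" by (simp add: HA_def A0)
  hence "HA \<noteq> 0" by auto
  hence PQ: "P = Q" using dP dQ by (metis mult_right_cancel)
  have "\<phi> (sf_p 1) = P $ 0" by (simp add: P_def)
  also have "\<dots> = Q $ 0" using PQ by simp
  also have "\<dots> = [:appell_c A 1, 1:]" by (simp add: Q_def appell_c_def)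
  finally have 1: "\<phi> (sf_p 1) = [:appell_c A 1, 1:]" .
  have 2: "\<phi> (sf_p n) = [:appell_c A n / fact (n - 1):]" if n: "n \<ge> 2" for n
  proof -
    obtain k where k: "n = Suc (Suc k)" using n by (metis add_2_eq_Suc le_Suc_ex)
    have "\<phi> (sf_p n) = P $ Suc k" using k by (simp add: P_def)
    also have "\<dots> = Q $ Suc k" using PQ by simp
    also have "\<dots> = [:appell_c A n / fact (n - 1):]"
      by (simp add: Q_def appell_c_def k del: of_nat_Suc)
    finally show ?thesis .
  qed
  show ?thesis using 1 2 by blast
qed

end
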